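(* Let $\Delta\ge3$. Then $\bar{\mathrm{R}}(\mathrm{R}(\Pi^{\mathsf{orcx}}))=\Pi^{\mathsf{orcx}}$ up to renaming of labels.
   Context: Node-edge-checkable problems $(\Sigma,\mathcal{N},\mathcal{E})$ have a finite label set $\Sigma$, node constraint $\mathcal{N}$ (a set of cardinality-$\Delta$ multisets over $\Sigma$) and edge constraint $\mathcal{E}$ (a set of cardinality-$2$ multisets). Round elimination. $\mathrm{R}(\Pi)$ is defined as follows. - $\mathcal{E}_{\mathrm{R}(\Pi)}$ consists of the configurations $S_1S_2$ of nonempty subsets of $\Sigma_\Pi$ with $L_1L_2\in\mathcal{E}_\Pi$ for all $L_i\in S_i$ that are maximal. Maximal means no other such configuration dominates it via elementwise inclusion up to permutation. - $\Sigma_{\mathrm{R}(\Pi)}$ is the set of sets occurring there. - $\mathcal{N}_{\mathrm{R}(\Pi)}$ consists of the configurations over $\Sigma_{\mathrm{R}(\Pi)}$ admitting a choice in $\mathcal{N}_\Pi$. $\bar{\mathrm{R}}(\Pi)$ is defined dually. - $\mathcal{N}_{\bar{\mathrm{R}}(\Pi)}$ consists of the maximal configurations of nonempty subsets all of whose choices lie in $\mathcal{N}_\Pi$. - $\Sigma_{\bar{\mathrm{R}}(\Pi)}$ is the set of sets occurring there. - $\mathcal{E}_{\bar{\mathrm{R}}(\Pi)}$ consists of the configurations admitting a choice in $\mathcal{E}_\Pi$. $\Pi^{\mathsf{orcx}}$ has labels $\Sigma_1\cup\Sigma_2$ with $\Sigma_1=\{\mathsf O,\mathsf R,\mathsf C,\mathsf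 X\}$ and $\Sigma_2=\{\mathsf o,\mathsf r,\mathsf c,\mathsf x\}$. Its node configurations are the $L_1\dots L_\Delta$ such that: - exactly one $L_k$ lies in $\Sigma_1$; and - there are distinct $k,k'$ with all other $L_{k''}\in\{\mathsf O,\mathsf o\}$, and either ($L_k\in\{\mathsf X,\mathsf x\}$ and $L_{k'}\in\{\mathsf O,\mathsf o\}$) or ($L_k\in\{\mathsf R,\mathsf r\}$ and $L_{k'}\in\{\mathsf C,\mathsf c\}$). Its edge configurations are all configurations in $[\mathsf O]\,[\mathsf O\mathsf R\mathsf C\mathsf X]$, $[\mathsf O\mathsf R]\,[\mathsf O\mathsf R]$, $[\mathsf O\mathsf C]\,[\mathsf O\mathsf C]$, $[\mathsf o]\,[\mathsf o\mathsf r\mathsf c\mathsf x]$ and $[\mathsf o\mathsf r]\,[\mathsf o\mathsf c]$, where $[S]\,[S']$ denotes all pairs with one entry from $S$ and the other from $S'$. *)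

theory Defs
  imports Main "HOL-Library.Multiset"
begin

text \<open>A node-edge-checkable problem: (label set, node constraint, edge constraint).
  Configurations are multisets of labels.\<close>
type_synonym 'a problem = "'a set \<times> 'a multiset set \<times> 'a multiset set"

definition labels :: "'a problem \<Rightarrow> 'a set" where "labels P = fst P"
definition nodeC :: "'a problem \<Rightarrow> 'a multiset set" where "nodeC P = fst (snd P)"
definition edgeC :: "'a problem \<Rightarrow> 'a multiset set" where "edgeC P = snd (snd P)"

definition dominated :: "'a set multiset \<Rightarrow> 'a set multiset \<Rightarrow> bool" where
  "dominated C D \<longleftrightarrow> rel_mset (\<subseteq>) C D"

definition is_choice :: "'a multiset \<Rightarrow> 'a set multiset \<Rightarrow> bool" where
  "is_choice C' C \<longleftrightarrow> rel_mset (\<in>) C' C"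

definition maximal_in :: "'a set multiset set \<Rightarrow> 'a set multiset \<Rightarrow> bool" where
  "maximal_in A C \<longleftrightarrow> C \<in> A \<and> (\<forall>D\<in>A. dominated C D \<longrightarrow> D = C)"

definition RE_edge_cand :: "'a problem \<Rightarrow> 'a set multiset set" where
  "RE_edge_cand P = {{#S1, S2#} | S1 S2. S1 \<noteq> {} \<and> S2 \<noteq> {} \<and> S1 \<subseteq> labels P \<and> S2 \<subseteq> labels P \<and>
       (\<forall>L1\<in>S1. \<forall>L2\<in>S2. {#L1, L2#} \<in> edgeC P)}"

definition RE :: "nat \<Rightarrow> 'a problem \<Rightarrow> 'a set problem" where
  "RE \<Delta> P = (let E = {C. maximal_in (RE_edge_cand P) C};
                  \<Sigma> = (\<Union>C\<in>E. set_mset C);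
                  N = {C. size C = \<Delta> \<and> set_mset C \<subseteq> \<Sigma> \<and> (\<exists>C'\<in>nodeC P. is_choice C' C)}
              in (\<Sigma>, N, E))"

definition REbar_node_cand :: "nat \<Rightarrow> 'a problem \<Rightarrow> 'a set multiset set" where
  "REbar_node_cand \<Delta> P = {C. size C = \<Delta> \<and> (\<forall>S\<in>#C. S \<noteq> {} \<and> S \<subseteq> labels P) \<and>
       (\<forall>C'. is_choice C' C \<longrightarrow> C' \<in> nodeC P)}"

definition REbar :: "nat \<Rightarrow> 'a problem \<Rightarrow> 'a set problem" where
  "REbar \<Delta> P = (let N = {C. maximal_in (REbar_node_cand \<Delta> P) C};
                  \<Sigma> = (\<Union>C\<in>N. set_mset C);
                  E = {C. size C = 2 \<and> set_mset C \<subseteq> \<Sigma> \<and> (\<exists>C'\<in>edgeC P. is_choice C' C)}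
              in (\<Sigma>, N, E))"

definition iso_problem :: "'a problem \<Rightarrow> 'b problem \<Rightarrow> bool" where
  "iso_problem P Q \<longleftrightarrow> (\<exists>f. bij_betw f (labels P) (labels Q) \<and>
      image_mset f ` nodeC P = nodeC Q \<and> image_mset f ` edgeC P = edgeC Q)"

datatype orcx = BO | BR | BC | BX | so | sr | sc | sx

definition sigma1 :: "orcx set" where "sigma1 = {BO, BR, BC, BX}"
definition sigma2 :: "orcx set" where "sigma2 = {so, sr, sc, sx}"

definition orcx_node :: "nat \<Rightarrow> orcx multiset set" where
  "orcx_node \<Delta> = {M. size M = \<Delta> \<and> size (filter_mset (\<lambda>l. l \<in> sigma1) M) = 1 \<and>
      (\<exists>a b M'. M = {#a, b#} + M' \<and> set_mset M' \<subseteq> {BO, so} \<and>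
         ((a \<in> {BX, sx} \<and> b \<in> {BO, so}) \<or> (a \<in> {BR, sr} \<and> b \<in> {BC, sc})))}"

definition pairs :: "orcx set \<Rightarrow> orcx set \<Rightarrow> orcx multiset set" where
  "pairs S T = {{#a, b#} | a b. a \<in> S \<and> b \<in> T}"

definition orcx_edge :: "orcx multiset set" where
  "orcx_edge = pairs {BO} {BO, BR, BC, BX} \<union> pairs {BO, BR} {BO, BR} \<union> pairs {BO, BC} {BO, BC}
      \<union> pairs {so} {so, sr, sc, sx} \<union> pairs {so, sr} {so, sc}"

definition Pi_orcx :: "nat \<Rightarrow> orcx problem" where
  "Pi_orcx \<Delta> = (sigma1 \<union> sigma2, orcx_node \<Delta>, orcx_edge)"

end

theory Submission
  imports Defs
begin


lemma rel_mset_image: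
  "(\<forall>x\<in>#M. R (f x) x) \<Longrightarrow> rel_mset R (image_mset f M) M"
  by (induct M) (auto intro: rel_mset_Plus)

lemma rel_mset_image2:
  "(\<forall>x\<in>#M. R x (f x)) \<Longrightarrow> rel_mset R M (image_mset f M)"
  by (induct M) (auto intro: rel_mset_Plus)

lemma rel_mset_repl:
  "(\<forall>x\<in>#M. R x c) \<Longrightarrow> rel_mset R M (replicate_mset (size M) c)"
  by (induct M) (auto intro: rel_mset_Plus)

lemma rel_mset_repl2:
  "(\<forall>x\<in>#M. R c x) \<Longrightarrow> rel_mset R (replicate_mset (size M) c) M"
  by (induct M) (auto intro: rel_mset_Plus)

lemma rel_mset_memL:
  assumes "rel_mset R M N" "x \<in># M" shows "\<exists>y\<in>#N. R x y"
proof -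
  obtain M1 where "M = add_mset x M1" using assms(2) by (metis multi_member_split)
  then show ?thesis using msed_rel_invL[of R x M1 N] assms(1) by auto
qed

lemma rel_mset_memR:
  assumes "rel_mset R M N" "y \<in># N" shows "\<exists>x\<in>#M. R x y"
proof -
  obtain N1 where "N = add_mset y N1" using assms(2) by (metis multi_member_split)
  then show ?thesis using msed_rel_invR[of R M y N1] assms(1) by auto
qed

lemma rel_mset_filter_size:
  assumes "rel_mset R M N" "\<And>x y. R x y \<Longrightarrow> (P x \<longleftrightarrow> Q y)"
  shows "size (filter_mset P M) = size (filter_mset Q N)"
  using assms by (induct rule: rel_mset_induct) auto

lemma rel_mset_filter_le:
  assumes "rel_mset R M N" "\<And>x y. R x y \<Longrightarrow> Q y \<Longrightarrow> P x"
  shows "size (filter_mset Q N) \<le> size (filter_mset P M)"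
  using assms by (induct rule: rel_mset_induct) auto

lemma rel_mset_sigma0:
  assumes "rel_mset R C D" "\<forall>S\<in>#D. finite S" "\<And>x y. R x y \<Longrightarrow> x \<subseteq> y"
  shows "sum_mset (image_mset card C) \<le> sum_mset (image_mset card D) \<and>
     (sum_mset (image_mset card C) = sum_mset (image_mset card D) \<longrightarrow> C = D)"
  using assms
proof (induct rule: rel_mset_induct)
  case empty
  then show ?case by simp
next
  case (add R' a b M N)
  have fb: "finite b" using add by auto
  have ab0: "a \<subseteq> b" using add by auto
  have ab: "card a \<le> card b" using ab0 fb by (simp add: card_mono)
  have IH: "sum_mset (image_mset card M) \<le> sum_mset (image_mset card N) \<and>
     (sum_mset (image_mset card M) = sum_mset (image_mset card N) \<longrightarrow> M = N)" using add by auto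
  show ?case
  proof
    show "sum_mset (image_mset card (add_mset a M)) \<le> sum_mset (image_mset card (add_mset b N))"
      using ab IH by simp
    show "sum_mset (image_mset card (add_mset a M)) = sum_mset (image_mset card (add_mset b N)) \<longrightarrow>
      add_mset a M = add_mset b N"
    proof
      assume "sum_mset (image_mset card (add_mset a M)) = sum_mset (image_mset card (add_mset b N))"
      then have "card a = card b" "sum_mset (image_mset card M) = sum_mset (image_mset card N)"
        using ab IH by auto
      then have "a = b" "M = N" using IH fb ab0 by (auto simp: card_subset_eq)
      then show "add_mset a M = add_mset b N" by simp
    qed
  qed
qed

lemma rel_mset_sigma:
  assumes "rel_mset (\<subseteq>) C D" "\<forall>S\<in>#D. finite S"
  shows "sum_mset (image_mset card C) \<le> sum_mset (image_mset card D) \<and>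
     (sum_mset (image_mset card C) = sum_mset (image_mset card D) \<longrightarrow> C = D)"
  using rel_mset_sigma0[OF assms] by auto

lemma rel_mset_two:
  "rel_mset R {#a, b#} {#c, d#} \<longleftrightarrow> (R a c \<and> R b d) \<or> (R a d \<and> R b c)"
proof
  assume "rel_mset R {#a, b#} {#c, d#}"
  then obtain N1 e where N: "{#c, d#} = add_mset e N1" "R a e" "rel_mset R {#b#} N1"
    using msed_rel_invL[of R a "{#b#}" "{#c, d#}"] by auto
  then obtain f where "N1 = {#f#}" "R b f"
    using msed_rel_invL[of R b "{#}" N1] by auto
  then show "(R a c \<and> R b d) \<or> (R a d \<and> R b c)" using N
    by (auto simp: add_eq_conv_ex)
next
  assume "(R a c \<and> R b d) \<or> (R a d \<and> R b c)"
  then show "rel_mset R {#a, b#} {#c, d#}"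
  proof
    assume "R a c \<and> R b d"
    then show ?thesis by (intro rel_mset_Plus rel_mset_Zero) auto
  next
    assume "R a d \<and> R b c"
    then have "rel_mset R {#a, b#} {#d, c#}" by (intro rel_mset_Plus rel_mset_Zero) auto
    moreover have "{#d, c#} = {#c, d#}" by (rule add_mset_commute)
    ultimately show ?thesis by simp
  qed
qed

lemma mset_two_eq:
  "{#a, b#} = {#c, d#} \<longleftrightarrow> (a = c \<and> b = d) \<or> (a = d \<and> b = c)"
  by (auto simp: add_eq_conv_ex)

lemma filter_image_size:
  "size (filter_mset P (image_mset f M)) = size (filter_mset (\<lambda>x. P (f x)) M)"
  by (induct M) auto

lemma filter_repl:
  "filter_mset P (replicate_mset n x) = (if P x then replicate_mset n x else {#})"
  by (induct n) auto

lemma all_eq_repl: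
  "(\<forall>x\<in>#M. x = c) \<Longrightarrow> M = replicate_mset (size M) c"
  by (induct M) auto

lemma rel_mset_repl_mem:
  "rel_mset R M (replicate_mset n c) \<Longrightarrow> x \<in># M \<Longrightarrow> R x c"
  using rel_mset_memL[of R M "replicate_mset n c" x] by (auto split: if_splits)

lemma size_two:
  assumes "size M = 2" shows "\<exists>a b. M = {#a, b#}"
proof -
  have "M \<noteq> {#}" using assms by auto
  then obtain a M1 where M: "M = add_mset a M1" by (metis multiset_cases)
  then have "size M1 = 1" using assms by simp
  then have "M1 \<noteq> {#}" by auto
  then obtain b M2 where M1: "M1 = add_mset b M2" by (metis multiset_cases)
  then have "M2 = {#}" using \<open>size M1 = 1\<close> by simp
  then show ?thesis using M M1 by auto
qed


definition "LA = {BO}"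
definition "LB = {BO, BR, BC, BX}"
definition "LP = {BO, BR}"
definition "LQ = {BO, BC}"
definition "La = {so}"
definition "Lb = {so, sr, sc, sx}"
definition "Lp = {so, sr}"
definition "Lq = {so, sc}"

lemmas Ldefs = LA_def LB_def LP_def LQ_def La_def Lb_def Lp_def Lq_def

lemma Ldist[simp]:
  "LA \<noteq> LB" "LA \<noteq> LP" "LA \<noteq> LQ" "LA \<noteq> La" "LA \<noteq> Lb" "LA \<noteq> Lp" "LA \<noteq> Lq"
  "LB \<noteq> LA" "LB \<noteq> LP" "LB \<noteq> LQ" "LB \<noteq> La" "LB \<noteq> Lb" "LB \<noteq> Lp" "LB \<noteq> Lq"
  "LP \<noteq> LA" "LP \<noteq> LB" "LP \<noteq> LQ" "LP \<noteq> La" "LP \<noteq> Lb" "LP \<noteq> Lp" "LP \<noteq> Lq"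
  "LQ \<noteq> LA" "LQ \<noteq> LB" "LQ \<noteq> LP" "LQ \<noteq> La" "LQ \<noteq> Lb" "LQ \<noteq> Lp" "LQ \<noteq> Lq"
  "La \<noteq> LA" "La \<noteq> LB" "La \<noteq> LP" "La \<noteq> LQ" "La \<noteq> Lb" "La \<noteq> Lp" "La \<noteq> Lq"
  "Lb \<noteq> LA" "Lb \<noteq> LB" "Lb \<noteq> LP" "Lb \<noteq> LQ" "Lb \<noteq> La" "Lb \<noteq> Lp" "Lb \<noteq> Lq"
  "Lp \<noteq> LA" "Lp \<noteq> LB" "Lp \<noteq> LP" "Lp \<noteq> LQ" "Lp \<noteq> La" "Lp \<noteq> Lb" "Lp \<noteq> Lq"
  "Lq \<noteq> LA" "Lq \<noteq> LB" "Lq \<noteq> LP" "Lq \<noteq> LQ" "Lq \<noteq> La" "Lq \<noteq> Lb" "Lq \<noteq> Lp"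
  unfolding Ldefs by (auto dest!: arg_cong[where f="\<lambda>S. [BO \<in> S, BR \<in> S, BC \<in> S, BX \<in> S, so \<in> S, sr \<in> S, sc \<in> S, sx \<in> S]"])

lemma orcx_UNIV: "(UNIV :: orcx set) = {BO, BR, BC, BX, so, sr, sc, sx}"
  apply (rule set_eqI) subgoal for x by (cases x) auto done

lemma all_orcx: "(\<forall>x. Q x) \<longleftrightarrow> Q BO \<and> Q BR \<and> Q BC \<and> Q BX \<and> Q so \<and> Q sr \<and> Q sc \<and> Q sx"
  apply (rule iffI)
   apply simp
  apply (rule allI)
  subgoal for x by (cases x) simp_all
  done

lemma ball_orcx: "(\<forall>x\<in>S. P x) \<longleftrightarrow> (BO \<in> S \<longrightarrow> P BO) \<and> (BR \<in> S \<longrightarrow> P BR) \<and> (BC \<in> S \<longrightarrow> P BC)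
  \<and> (BX \<in> S \<longrightarrow> P BX) \<and> (so \<in> S \<longrightarrow> P so) \<and> (sr \<in> S \<longrightarrow> P sr) \<and> (sc \<in> S \<longrightarrow> P sc) \<and> (sx \<in> S \<longrightarrow> P sx)"
  unfolding Ball_def by (rule all_orcx)

lemma subset_orcx: "(S \<subseteq> T) \<longleftrightarrow> (\<forall>x\<in>S. x \<in> (T::orcx set))"
  by auto

lemma nonempty_orcx: "(S \<noteq> {}) \<longleftrightarrow> (BO \<in> S \<or> BR \<in> S \<or> BC \<in> S \<or> BX \<in> S \<or> so \<in> S \<or> sr \<in> S \<or> sc \<in> S \<or> sx \<in> S)"
  unfolding ex_in_conv[symmetric] Bex_def using all_orcx[of "\<lambda>x. x \<notin> S"] by blast

lemma finite_orcx[simp]: "finite (S :: orcx set)"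
proof -
  have "finite (UNIV :: orcx set)" by (simp only: orcx_UNIV finite.emptyI finite_insert)
  then show ?thesis by (rule finite_subset[rotated]) simp
qed

lemma Pi_simps:
  "labels (Pi_orcx \<Delta>) = UNIV" "nodeC (Pi_orcx \<Delta>) = orcx_node \<Delta>" "edgeC (Pi_orcx \<Delta>) = orcx_edge"
  by (auto simp: labels_def nodeC_def edgeC_def Pi_orcx_def sigma1_def sigma2_def orcx_UNIV)

lemma pairs_mem: "{#x, y#} \<in> pairs S T \<longleftrightarrow> (x \<in> S \<and> y \<in> T) \<or> (x \<in> T \<and> y \<in> S)"
  unfolding pairs_def by (auto simp: mset_two_eq)

fun compat :: "orcx \<Rightarrow> orcx \<Rightarrow> bool" where
  "compat BO y = (y \<in> {BO, BR, BC, BX})"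
| "compat BR y = (y \<in> {BO, BR})"
| "compat BC y = (y \<in> {BO, BC})"
| "compat BX y = (y = BO)"
| "compat so y = (y \<in> {so, sr, sc, sx})"
| "compat sr y = (y \<in> {so, sc})"
| "compat sc y = (y \<in> {so, sr})"
| "compat sx y = (y = so)"

lemma edge_compat: "{#x, y#} \<in> orcx_edge \<longleftrightarrow> compat x y"
  unfolding orcx_edge_def Un_iff pairs_mem by (cases x; cases y) simp_all

definition "E5 = {{#LA, LB#}, {#LP, LP#}, {#LQ, LQ#}, {#La, Lb#}, {#Lp, Lq#}}"

lemma biclique:
  assumes "S1 \<noteq> {}" "S2 \<noteq> {}" "\<forall>x\<in>S1. \<forall>y\<in>S2. compat x y"
  shows "(S1 \<subseteq> LA \<and> S2 \<subseteq> LB) \<or> (S1 \<subseteq> LB \<and> S2 \<subseteq> LA) \<or> (S1 \<subseteq> LP \<and> S2 \<subseteq> LP)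
    \<or> (S1 \<subseteq> LQ \<and> S2 \<subseteq> LQ) \<or> (S1 \<subseteq> La \<and> S2 \<subseteq> Lb) \<or> (S1 \<subseteq> Lb \<and> S2 \<subseteq> La)
    \<or> (S1 \<subseteq> Lp \<and> S2 \<subseteq> Lq) \<or> (S1 \<subseteq> Lq \<and> S2 \<subseteq> Lp)"
  using assms unfolding Ldefs subset_orcx nonempty_orcx
  apply (simp only: ball_orcx)
  apply (simp only: compat.simps insert_iff singleton_iff orcx.distinct simp_thms empty_iff)
  apply sat
  done


lemma Lsub[simp]:
  "LA \<subseteq> LA" "LA \<subseteq> LB" "LA \<subseteq> LP" "LA \<subseteq> LQ"
  "\<not> LA \<subseteq> La" "\<not> LA \<subseteq> Lb" "\<not> LA \<subseteq> Lp" "\<not> LA \<subseteq> Lq"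
  "\<not> LB \<subseteq> LA" "LB \<subseteq> LB" "\<not> LB \<subseteq> LP" "\<not> LB \<subseteq> LQ"
  "\<not> LB \<subseteq> La" "\<not> LB \<subseteq> Lb" "\<not> LB \<subseteq> Lp" "\<not> LB \<subseteq> Lq"
  "\<not> LP \<subseteq> LA" "LP \<subseteq> LB" "LP \<subseteq> LP" "\<not> LP \<subseteq> LQ"
  "\<not> LP \<subseteq> La" "\<not> LP \<subseteq> Lb" "\<not> LP \<subseteq> Lp" "\<not> LP \<subseteq> Lq"
  "\<not> LQ \<subseteq> LA" "LQ \<subseteq> LB" "\<not> LQ \<subseteq> LP" "LQ \<subseteq> LQ"
  "\<not> LQ \<subseteq> La" "\<not> LQ \<subseteq> Lb" "\<not> LQ \<subseteq> Lp" "\<not> LQ \<subseteq> Lq"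
  "\<not> La \<subseteq> LA" "\<not> La \<subseteq> LB" "\<not> La \<subseteq> LP" "\<not> La \<subseteq> LQ"
  "La \<subseteq> La" "La \<subseteq> Lb" "La \<subseteq> Lp" "La \<subseteq> Lq"
  "\<not> Lb \<subseteq> LA" "\<not> Lb \<subseteq> LB" "\<not> Lb \<subseteq> LP" "\<not> Lb \<subseteq> LQ"
  "\<not> Lb \<subseteq> La" "Lb \<subseteq> Lb" "\<not> Lb \<subseteq> Lp" "\<not> Lb \<subseteq> Lq"
  "\<not> Lp \<subseteq> LA" "\<not> Lp \<subseteq> LB" "\<not> Lp \<subseteq> LP" "\<not> Lp \<subseteq> LQ"
  "\<not> Lp \<subseteq> La" "Lp \<subseteq> Lb" "Lp \<subseteq> Lp" "\<not> Lp \<subseteq> Lq"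
  "\<not> Lq \<subseteq> LA" "\<not> Lq \<subseteq> LB" "\<not> Lq \<subseteq> LP" "\<not> Lq \<subseteq> LQ"
  "\<not> Lq \<subseteq> La" "Lq \<subseteq> Lb" "\<not> Lq \<subseteq> Lp" "Lq \<subseteq> Lq"
  unfolding Ldefs by auto


definition sig :: "'a set multiset \<Rightarrow> nat" where
  "sig C = sum_mset (image_mset card C)"

lemma dom_trans: "dominated A B \<Longrightarrow> dominated B C \<Longrightarrow> dominated A C"
proof -
  assume "dominated A B" "dominated B C"
  then have "(rel_mset (\<subseteq>) OO rel_mset (\<subseteq>)) A C" unfolding dominated_def by auto
  then have "rel_mset ((\<subseteq>) OO (\<subseteq>)) A C" by (simp add: multiset.rel_compp)
  moreover have "((\<subseteq>) OO (\<subseteq>)) = ((\<subseteq>) :: 'a set \<Rightarrow> _)" by (auto intro!: ext)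
  ultimately show "dominated A C" unfolding dominated_def by simp
qed

lemma max_char:
  assumes GA: "G \<subseteq> A" and dom: "\<forall>C\<in>A. \<exists>E\<in>G. dominated C E"
    and anti: "\<forall>E\<in>G. \<forall>E'\<in>G. dominated E E' \<longrightarrow> sig E = sig E'"
    and fin: "\<forall>C\<in>A. \<forall>S\<in>#C. finite S"
  shows "{C. maximal_in A C} = G"
proof
  show "{C. maximal_in A C} \<subseteq> G"
  proof
    fix C assume "C \<in> {C. maximal_in A C}"
    then have C: "C \<in> A" "\<forall>D\<in>A. dominated C D \<longrightarrow> D = C" unfolding maximal_in_def by auto
    then obtain E where "E \<in> G" "dominated C E" using dom by auto
    then have "E = C" using C GA by auto
    then show "C \<in> G" using \<open>E \<in> G\<close> by simp
  qed
next
  show "G \<subseteq> {C. maximal_in A C}"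
  proof
    fix E assume E: "E \<in> G"
    have "\<forall>D\<in>A. dominated E D \<longrightarrow> D = E"
    proof (intro ballI impI)
      fix D assume D: "D \<in> A" "dominated E D"
      obtain E' where E': "E' \<in> G" "dominated D E'" using dom D by auto
      have "dominated E E'" using dom_trans D E' by blast
      then have s: "sig E = sig E'" using anti E E' by auto
      have "sig E \<le> sig D" using rel_mset_sigma[of E D] D fin unfolding dominated_def sig_def by auto
      moreover have "sig D \<le> sig E'" using rel_mset_sigma[of D E'] E' fin GA unfolding dominated_def sig_def by auto
      ultimately have "sig E = sig D" using s by simp
      then show "D = E" using rel_mset_sigma[of E D] D fin unfolding dominated_def sig_def by auto
    qed
    then show "E \<in> {C. maximal_in A C}" using E GA unfolding maximal_in_def by auto
  qed
qed

lemma cand_iff: "RE_edge_cand (Pi_orcx \<Delta>) =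
   {{#S1, S2#} | S1 S2. S1 \<noteq> {} \<and> S2 \<noteq> {} \<and> (\<forall>x\<in>S1. \<forall>y\<in>S2. compat x y)}"
  by (simp add: RE_edge_cand_def Pi_simps edge_compat)

lemma cand_dom: "C \<in> RE_edge_cand (Pi_orcx \<Delta>) \<Longrightarrow> \<exists>E\<in>E5. dominated C E"
proof -
  assume "C \<in> RE_edge_cand (Pi_orcx \<Delta>)"
  then obtain S1 S2 where C: "C = {#S1, S2#}" "S1 \<noteq> {}" "S2 \<noteq> {}" "\<forall>x\<in>S1. \<forall>y\<in>S2. compat x y"
    unfolding cand_iff by auto
  from biclique[OF C(2-4)] show ?thesis unfolding C(1) E5_def dominated_def
    by (elim disjE) (simp_all add: rel_mset_two)
qed

lemma E5_cand: "E5 \<subseteq> RE_edge_cand (Pi_orcx \<Delta>)"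
  unfolding cand_iff E5_def
  apply (intro insert_subsetI empty_subsetI; simp only: mem_Collect_eq)
  apply (rule exI[of _ LA], rule exI[of _ LB], simp add: Ldefs)
  apply (rule exI[of _ LP], rule exI[of _ LP], simp add: Ldefs)
  apply (rule exI[of _ LQ], rule exI[of _ LQ], simp add: Ldefs)
  apply (rule exI[of _ La], rule exI[of _ Lb], simp add: Ldefs)
  apply (rule exI[of _ Lp], rule exI[of _ Lq], simp add: Ldefs)
  done

lemma E5_anti: "\<forall>E\<in>E5. \<forall>E'\<in>E5. dominated E E' \<longrightarrow> sig E = sig E'"
  unfolding E5_def dominated_def by (simp add: rel_mset_two)

lemma RE_edges: "{C. maximal_in (RE_edge_cand (Pi_orcx \<Delta>)) C} = E5"
  by (rule max_char[OF E5_cand]) (auto simp: cand_dom E5_anti)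

definition "Lab8 = {LA, LB, LP, LQ, La, Lb, Lp, Lq}"

definition NR :: "nat \<Rightarrow> orcx set multiset set" where
  "NR \<Delta> = {C. size C = \<Delta> \<and> set_mset C \<subseteq> Lab8 \<and> (\<exists>C'\<in>orcx_node \<Delta>. is_choice C' C)}"

lemma RE_Pi: "RE \<Delta> (Pi_orcx \<Delta>) = (Lab8, NR \<Delta>, E5)"
proof -
  have "(\<Union>C\<in>E5. set_mset C) = Lab8" unfolding E5_def Lab8_def by auto
  then show ?thesis unfolding RE_def Let_def RE_edges NR_def by (simp add: Pi_simps)
qed


definition "sh1 n = add_mset BX (replicate_mset (Suc (Suc n)) so)"
definition "sh2 n = add_mset BO (add_mset sx (replicate_mset (Suc n) so))"
definition "sh3 n = add_mset BR (add_mset sc (replicate_mset (Suc n) so))"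
definition "sh4 n = add_mset BC (add_mset sr (replicate_mset (Suc n) so))"
definition "sh5 n = add_mset BO (add_mset sr (add_mset sc (replicate_mset n so)))"
lemmas shdefs = sh1_def sh2_def sh3_def sh4_def sh5_def

lemma two_repl:
  assumes "set_mset M \<subseteq> {x, y}" "x \<noteq> y"
  shows "M = replicate_mset (count M x) x + replicate_mset (count M y) y"
proof (rule multiset_eqI)
  fix z
  show "count M z = count (replicate_mset (count M x) x + replicate_mset (count M y) y) z"
  proof (cases "z = x \<or> z = y")
    case True then show ?thesis using assms(2) by auto
  next
    case False
    then have "z \<notin># M" using assms(1) by auto
    then show ?thesis using False by (simp add: count_eq_zero_iff)
  qed
qed

lemma node_shapes:
  "orcx_node (Suc (Suc (Suc n))) = {sh1 n, sh2 n, sh3 n, sh4 n, sh5 n}"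
proof (rule set_eqI, rule iffI)
  fix M assume "M \<in> orcx_node (Suc (Suc (Suc n)))"
  then obtain a b M' where M: "size M = Suc (Suc (Suc n))"
    "size (filter_mset (\<lambda>l. l \<in> sigma1) M) = 1" "M = {#a, b#} + M'" "set_mset M' \<subseteq> {BO, so}"
    "(a \<in> {BX, sx} \<and> b \<in> {BO, so}) \<or> (a \<in> {BR, sr} \<and> b \<in> {BC, sc})"
    unfolding orcx_node_def by blast
  define i where "i = count M' BO"
  define j where "j = count M' so"
  have M': "M' = replicate_mset i BO + replicate_mset j so"
    unfolding i_def j_def by (rule two_repl[OF M(4)]) simp
  have sz: "i + j = Suc n" using M(1) unfolding M(3) M' by simp
  have f: "size (filter_mset (\<lambda>l. l \<in> sigma1) M) =
     (if a \<in> sigma1 then 1 else 0) + (if b \<in> sigma1 then 1 else 0) + i"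
    unfolding M(3) M' by (simp add: filter_repl sigma1_def)
  from M(5) show "M \<in> {sh1 n, sh2 n, sh3 n, sh4 n, sh5 n}"
  proof (elim disjE conjE)
    assume "a \<in> {BX, sx}" "b \<in> {BO, so}"
    then show ?thesis using f M(2) sz unfolding M(3) M'
      apply (simp add: sigma1_def)
      apply (elim disjE)
      apply (simp_all add: shdefs)
      done
  next
    assume "a \<in> {BR, sr}" "b \<in> {BC, sc}"
    then show ?thesis using f M(2) sz unfolding M(3) M'
      apply (simp add: sigma1_def)
      apply (elim disjE)
      apply (simp_all add: shdefs)
      done
  qed
next
  fix M assume "M \<in> {sh1 n, sh2 n, sh3 n, sh4 n, sh5 n}"
  then show "M \<in> orcx_node (Suc (Suc (Suc n)))"
    unfolding orcx_node_def
    apply (elim insertE emptyE)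
    apply (rule CollectI, intro conjI, simp add: shdefs, simp add: shdefs filter_repl sigma1_def,
       rule exI[of _ BX], rule exI[of _ so], rule exI[of _ "replicate_mset (Suc n) so"], simp add: shdefs)
    apply (rule CollectI, intro conjI, simp add: shdefs, simp add: shdefs filter_repl sigma1_def,
       rule exI[of _ sx], rule exI[of _ BO], rule exI[of _ "replicate_mset (Suc n) so"], simp add: shdefs add_mset_commute)
    apply (rule CollectI, intro conjI, simp add: shdefs, simp add: shdefs filter_repl sigma1_def,
       rule exI[of _ BR], rule exI[of _ sc], rule exI[of _ "replicate_mset (Suc n) so"], simp add: shdefs)
    apply (rule CollectI, intro conjI, simp add: shdefs, simp add: shdefs filter_repl sigma1_def,
       rule exI[of _ sr], rule exI[of _ BC], rule exI[of _ "replicate_mset (Suc n) so"], simp add: shdefs add_mset_commute)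
    apply (rule CollectI, intro conjI, simp add: shdefs, simp add: shdefs filter_repl sigma1_def,
       rule exI[of _ sr], rule exI[of _ sc], rule exI[of _ "add_mset BO (replicate_mset n so)"], simp add: shdefs add_mset_commute)
    done
qed


definition "Up = {LA, LB, LP, LQ}"
definition "Lo = {La, Lb, Lp, Lq}"

lemma Lmem_iff:
  "x \<in> LA \<longleftrightarrow> x = BO" "x \<in> LB \<longleftrightarrow> x = BO \<or> x = BR \<or> x = BC \<or> x = BX"
  "x \<in> LP \<longleftrightarrow> x = BO \<or> x = BR" "x \<in> LQ \<longleftrightarrow> x = BO \<or> x = BC"
  "x \<in> La \<longleftrightarrow> x = so" "x \<in> Lb \<longleftrightarrow> x = so \<or> x = sr \<or> x = sc \<or> x = sx"
  "x \<in> Lp \<longleftrightarrow> x = so \<or> x = sr" "x \<in> Lq \<longleftrightarrow> x = so \<or> x = sc"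
  unfolding Ldefs by auto

lemma Lab8_cases: "S \<in> Lab8 \<Longrightarrow> (S \<in> Up \<and> S \<notin> Lo) \<or> (S \<in> Lo \<and> S \<notin> Up)"
  unfolding Lab8_def Up_def Lo_def by (elim insertE emptyE) simp_all

lemma Up_BO: "S \<in> Up \<Longrightarrow> BO \<in> S" unfolding Up_def by (elim insertE emptyE) (simp_all add: Lmem_iff)
lemma Lo_so: "S \<in> Lo \<Longrightarrow> so \<in> S" unfolding Lo_def by (elim insertE emptyE) (simp_all add: Lmem_iff)
lemma Up_Lab8: "S \<in> Up \<Longrightarrow> S \<in> Lab8" unfolding Up_def Lab8_def by (elim insertE emptyE) simp_all
lemma Lo_Lab8: "S \<in> Lo \<Longrightarrow> S \<in> Lab8" unfolding Lo_def Lab8_def by (elim insertE emptyE) simp_all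
lemma Lab8_fin: "finite Lab8" unfolding Lab8_def by simp

lemma Lmem_BX: "S \<in> Lab8 \<Longrightarrow> BX \<in> S \<Longrightarrow> S = LB" unfolding Lab8_def by (elim insertE emptyE) (simp_all add: Lmem_iff)
lemma Lmem_sx: "S \<in> Lab8 \<Longrightarrow> sx \<in> S \<Longrightarrow> S = Lb" unfolding Lab8_def by (elim insertE emptyE) (simp_all add: Lmem_iff)
lemma Lmem_BR: "S \<in> Lab8 \<Longrightarrow> BR \<in> S \<Longrightarrow> S = LB \<or> S = LP" unfolding Lab8_def by (elim insertE emptyE) (simp_all add: Lmem_iff)
lemma Lmem_BC: "S \<in> Lab8 \<Longrightarrow> BC \<in> S \<Longrightarrow> S = LB \<or> S = LQ" unfolding Lab8_def by (elim insertE emptyE) (simp_all add: Lmem_iff)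
lemma Lmem_sr: "S \<in> Lab8 \<Longrightarrow> sr \<in> S \<Longrightarrow> S = Lb \<or> S = Lp" unfolding Lab8_def by (elim insertE emptyE) (simp_all add: Lmem_iff)
lemma Lmem_sc: "S \<in> Lab8 \<Longrightarrow> sc \<in> S \<Longrightarrow> S = Lb \<or> S = Lq" unfolding Lab8_def by (elim insertE emptyE) (simp_all add: Lmem_iff)
lemma Lmem_sig: "S \<in> Lab8 \<Longrightarrow> x \<in> S \<Longrightarrow> (x \<in> sigma1 \<longleftrightarrow> S \<in> Up)"
  unfolding Lab8_def Up_def sigma1_def by (elim insertE emptyE) (auto simp: Lmem_iff)

lemma Up_simps[simp]: "LA \<in> Up" "LB \<in> Up" "LP \<in> Up" "LQ \<in> Up" "La \<notin> Up" "Lb \<notin> Up" "Lp \<notin> Up" "Lq \<notin> Up"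
  unfolding Up_def by simp_all
lemma Lo_simps[simp]: "LA \<notin> Lo" "LB \<notin> Lo" "LP \<notin> Lo" "LQ \<notin> Lo" "La \<in> Lo" "Lb \<in> Lo" "Lp \<in> Lo" "Lq \<in> Lo"
  unfolding Lo_def by simp_all
lemma Lab8_simps[simp]: "LA \<in> Lab8" "LB \<in> Lab8" "LP \<in> Lab8" "LQ \<in> Lab8" "La \<in> Lab8" "Lb \<in> Lab8" "Lp \<in> Lab8" "Lq \<in> Lab8"
  unfolding Lab8_def by simp_all
lemma Lmem_simps[simp]: "BX \<in> LB" "sx \<in> Lb" "BR \<in> LB" "BR \<in> LP" "BC \<in> LB" "BC \<in> LQ"
  "sr \<in> Lb" "sr \<in> Lp" "sc \<in> Lb" "sc \<in> Lq"
  by (simp_all add: Lmem_iff)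

lemma filter0:
  assumes "size (filter_mset P M) = 0" "x \<in># M" shows "\<not> P x"
proof
  assume "P x"
  then have "x \<in># filter_mset P M" using assms(2) by simp
  then have "filter_mset P M \<noteq> {#}" by (metis empty_iff set_mset_empty)
  then show False using assms(1) by (simp only: size_eq_0_iff_empty)
qed

lemma filter1:
  assumes "size (filter_mset P M) = 1"
  shows "\<exists>x M1. M = add_mset x M1 \<and> P x \<and> (\<forall>y\<in>#M1. \<not> P y)"
proof -
  have "filter_mset P M \<noteq> {#}"
  proof
    assume h: "filter_mset P M = {#}"
    have "size (filter_mset P M) = 0" by (simp only: h size_empty)
    then show False using assms by simp
  qed
  then obtain x where "x \<in># filter_mset P M" by (meson multiset_nonemptyE)
  then have x: "x \<in># M" "P x" by auto
  then obtain M1 where M: "M = add_mset x M1" by (metis multi_member_split)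
  then have "size (filter_mset P M1) = 0" using assms x by simp
  then have "\<forall>y\<in>#M1. \<not> P y" using filter0[of P M1] by auto
  then show ?thesis using M x by blast
qed


lemma filter0': "size (filter_mset P M) = 0 \<Longrightarrow> \<forall>x\<in>#M. \<not> P x"
  using filter0 by metis

definition goodR :: "nat \<Rightarrow> orcx set multiset \<Rightarrow> bool" where
  "goodR \<Delta> C \<longleftrightarrow> size C = \<Delta> \<and> set_mset C \<subseteq> Lab8 \<and> size (filter_mset (\<lambda>S. S \<in> Up) C) = 1 \<and>
     (LB \<in># C \<or> Lb \<in># C \<or> ((LP \<in># C \<or> Lp \<in># C) \<and> (LQ \<in># C \<or> Lq \<in># C)))"

lemma NR_good:
  assumes "C \<in> NR (Suc (Suc (Suc n)))"
  shows "goodR (Suc (Suc (Suc n))) C"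
proof -
  obtain C' where C: "size C = Suc (Suc (Suc n))" "set_mset C \<subseteq> Lab8" "C' \<in> orcx_node (Suc (Suc (Suc n)))"
    "rel_mset (\<in>) C' C"
    using assms unfolding NR_def is_choice_def by auto
  have R: "rel_mset (\<lambda>x S. x \<in> S \<and> S \<in> Lab8) C' C"
    by (rule multiset.rel_mono_strong[OF C(4)]) (use C(2) in auto)
  have "size (filter_mset (\<lambda>x. x \<in> sigma1) C') = size (filter_mset (\<lambda>S. S \<in> Up) C)"
    by (rule rel_mset_filter_size[OF R]) (auto simp: Lmem_sig)
  moreover have "size (filter_mset (\<lambda>x. x \<in> sigma1) C') = 1" using C(3) unfolding orcx_node_def by auto
  ultimately have f: "size (filter_mset (\<lambda>S. S \<in> Up) C) = 1" by simp
  have mem: "\<And>x. x \<in># C' \<Longrightarrow> \<exists>S\<in>#C. x \<in> S \<and> S \<in> Lab8" using rel_mset_memL[OF R] by auto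
  have "LB \<in># C \<or> Lb \<in># C \<or> ((LP \<in># C \<or> Lp \<in># C) \<and> (LQ \<in># C \<or> Lq \<in># C))"
    using C(3) unfolding node_shapes
  proof (elim insertE emptyE)
    assume "C' = sh1 n" then show ?thesis using mem[of BX] Lmem_BX by (auto simp: sh1_def)
  next
    assume "C' = sh2 n" then show ?thesis using mem[of sx] Lmem_sx by (auto simp: sh2_def)
  next
    assume "C' = sh3 n" then show ?thesis using mem[of BR] mem[of sc] Lmem_BR Lmem_sc by (auto simp: sh3_def)
  next
    assume "C' = sh4 n" then show ?thesis using mem[of BC] mem[of sr] Lmem_BC Lmem_sr by (auto simp: sh4_def)
  next
    assume "C' = sh5 n" then show ?thesis using mem[of sc] mem[of sr] Lmem_sc Lmem_sr by (auto simp: sh5_def)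
  qed
  then show ?thesis unfolding goodR_def using C(1,2) f by auto
qed

lemma lo_rest:
  assumes "\<forall>S\<in>#C0. S \<notin> Up" "set_mset C0 \<subseteq> Lab8"
  shows "rel_mset (\<in>) (replicate_mset (size C0) so) C0"
proof (rule rel_mset_repl2, rule ballI)
  fix S assume S: "S \<in># C0"
  then have "S \<in> Lab8" "S \<notin> Up" using assms by auto
  then have "S \<in> Lo" using Lab8_cases by blast
  then show "so \<in> S" by (rule Lo_so)
qed

lemma good_NR:
  assumes "goodR (Suc (Suc (Suc n))) C"
  shows "C \<in> NR (Suc (Suc (Suc n)))"
proof -
  have C: "size C = Suc (Suc (Suc n))" "set_mset C \<subseteq> Lab8" "size (filter_mset (\<lambda>S. S \<in> Up) C) = 1"
    "LB \<in># C \<or> Lb \<in># C \<or> ((LP \<in># C \<or> Lp \<in># C) \<and> (LQ \<in># C \<or> Lq \<in># C))"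
    using assms unfolding goodR_def by auto
  have "\<exists>C'\<in>orcx_node (Suc (Suc (Suc n))). rel_mset (\<in>) C' C"
  proof (cases "LB \<in># C")
    case True
    then obtain C0 where C0: "C = add_mset LB C0" by (metis multi_member_split)
    have "\<forall>S\<in>#C0. S \<notin> Up" using C(3) unfolding C0 by (intro filter0') simp
    then have r: "rel_mset (\<in>) (replicate_mset (size C0) so) C0" using lo_rest C(2) unfolding C0 by auto
    have "size C0 = Suc (Suc n)" using C(1) C0 by simp
    then have "rel_mset (\<in>) (sh1 n) C" unfolding sh1_def C0 using r by (auto intro: rel_mset_Plus)
    then show ?thesis unfolding node_shapes by blast
  next
    case nB: False
    show ?thesis
    proof (cases "Lb \<in># C")
      case True
      then obtain C0 where C0: "C = add_mset Lb C0" by (metis multi_member_split)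
      have "size (filter_mset (\<lambda>S. S \<in> Up) C0) = 1" using C(3) unfolding C0 by simp
      then obtain U C1 where C1: "C0 = add_mset U C1" "U \<in> Up" "\<forall>S\<in>#C1. S \<notin> Up" using filter1 by blast
      have r: "rel_mset (\<in>) (replicate_mset (size C1) so) C1" using lo_rest C(2) C1 unfolding C0 by auto
      have "size C1 = Suc n" using C(1) C0 C1 by simp
      then have "rel_mset (\<in>) (add_mset sx (add_mset BO (replicate_mset (Suc n) so))) C"
        unfolding C0 C1 using r Up_BO[OF C1(2)] by (auto intro!: rel_mset_Plus)
      moreover have "add_mset sx (add_mset BO (replicate_mset (Suc n) so)) = sh2 n"
        unfolding sh2_def by (simp add: add_mset_commute)
      ultimately show ?thesis unfolding node_shapes by auto
    next
      case nb: False
      have PQ: "(LP \<in># C \<or> Lp \<in># C) \<and> (LQ \<in># C \<or> Lq \<in># C)" using C(4) nB nb by auto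
      show ?thesis
      proof (cases "LP \<in># C")
        case True
        then obtain C0 where C0: "C = add_mset LP C0" by (metis multi_member_split)
        have nu: "\<forall>S\<in>#C0. S \<notin> Up" using C(3) unfolding C0 by (intro filter0') simp
        then have "Lq \<in># C0" using PQ unfolding C0 by auto
        then obtain C1 where C1: "C0 = add_mset Lq C1" by (metis multi_member_split)
        have r: "rel_mset (\<in>) (replicate_mset (size C1) so) C1" using lo_rest C(2) nu unfolding C0 C1 by auto
        have "size C1 = Suc n" using C(1) C0 C1 by simp
        then have "rel_mset (\<in>) (sh3 n) C" unfolding sh3_def C0 C1 using r by (auto intro!: rel_mset_Plus)
        then show ?thesis unfolding node_shapes by blast
      next
        case nP: False
        show ?thesis
        proof (cases "LQ \<in># C")
          case True
          then obtain C0 where C0: "C = add_mset LQ C0" by (metis multi_member_split)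
          have nu: "\<forall>S\<in>#C0. S \<notin> Up" using C(3) unfolding C0 by (intro filter0') simp
          then have "Lp \<in># C0" using PQ nP unfolding C0 by auto
          then obtain C1 where C1: "C0 = add_mset Lp C1" by (metis multi_member_split)
          have r: "rel_mset (\<in>) (replicate_mset (size C1) so) C1" using lo_rest C(2) nu unfolding C0 C1 by auto
          have "size C1 = Suc n" using C(1) C0 C1 by simp
          then have "rel_mset (\<in>) (sh4 n) C" unfolding sh4_def C0 C1 using r by (auto intro!: rel_mset_Plus)
          then show ?thesis unfolding node_shapes by blast
        next
          case nQ: False
          have "Lp \<in># C" using PQ nP by auto
          then obtain C0 where C0: "C = add_mset Lp C0" by (metis multi_member_split)
          have "Lq \<in># C0" using PQ nQ unfolding C0 by auto
          then obtain C1 where C1: "C0 = add_mset Lq C1" by (metis multi_member_split)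
          have "size (filter_mset (\<lambda>S. S \<in> Up) C1) = 1" using C(3) unfolding C0 C1 by simp
          then obtain U C2 where C2: "C1 = add_mset U C2" "U \<in> Up" "\<forall>S\<in>#C2. S \<notin> Up" using filter1 by blast
          have r: "rel_mset (\<in>) (replicate_mset (size C2) so) C2" using lo_rest C(2) C2 unfolding C0 C1 by auto
          have "size C2 = n" using C(1) C0 C1 C2 by simp
          then have "rel_mset (\<in>) (add_mset sr (add_mset sc (add_mset BO (replicate_mset n so)))) C"
            unfolding C0 C1 C2 using r Up_BO[OF C2(2)] by (auto intro!: rel_mset_Plus)
          moreover have "add_mset sr (add_mset sc (add_mset BO (replicate_mset n so))) = sh5 n"
            unfolding sh5_def by (simp add: add_mset_commute)
          ultimately show ?thesis unfolding node_shapes by auto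
        qed
      qed
    qed
  qed
  then show ?thesis unfolding NR_def is_choice_def using C(1,2) by auto
qed

lemma NR_iff: "C \<in> NR (Suc (Suc (Suc n))) \<longleftrightarrow> goodR (Suc (Suc (Suc n))) C"
  using NR_good good_NR by blast


fun gl :: "orcx \<Rightarrow> orcx set set" where
  "gl BO = Up" | "gl BX = {LB}" | "gl BR = {LP, LB}" | "gl BC = {LQ, LB}"
| "gl so = Lo" | "gl sx = {Lb}" | "gl sr = {Lp, Lb}" | "gl sc = {Lq, Lb}"

lemma gl_sub: "gl x \<subseteq> Up \<and> x \<in> sigma1 \<or> gl x \<subseteq> Lo \<and> x \<notin> sigma1"
  by (cases x) (simp_all add: Up_def Lo_def sigma1_def)

lemma gl_ne: "gl x \<noteq> {}" by (cases x) (simp_all add: Up_def Lo_def)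

lemma gl_Lab8: "gl x \<subseteq> Lab8" by (cases x) (simp_all add: Up_def Lo_def Lab8_def)

lemma UpLo: "T \<in> Up \<Longrightarrow> T \<notin> Lo" unfolding Up_def by (elim insertE emptyE) simp_all

lemma image_repl: "image_mset f (replicate_mset n x) = replicate_mset n (f x)"
  by (induct n) auto

lemma img_cand:
  assumes M: "M \<in> orcx_node (Suc (Suc (Suc n)))" and C': "rel_mset (\<in>) C' (image_mset gl M)"
  shows "goodR (Suc (Suc (Suc n))) C'"
proof -
  have sz: "size C' = Suc (Suc (Suc n))" using rel_mset_size[OF C'] M unfolding orcx_node_def by simp
  have R: "rel_mset (\<lambda>y T. y \<in> T \<and> (\<exists>x. T = gl x)) C' (image_mset gl M)"
    by (rule multiset.rel_mono_strong[OF C']) auto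
  have sub: "set_mset C' \<subseteq> Lab8"
  proof
    fix y assume "y \<in># C'"
    then obtain T where "y \<in> T" "\<exists>x. T = gl x" using rel_mset_memL[OF R] by blast
    then show "y \<in> Lab8" using gl_Lab8 by blast
  qed
  have "size (filter_mset (\<lambda>y. y \<in> Up) C') = size (filter_mset (\<lambda>T. T \<subseteq> Up) (image_mset gl M))"
  proof (rule rel_mset_filter_size[OF R])
    fix y T assume "y \<in> T \<and> (\<exists>x. T = gl x)"
    then obtain x where "y \<in> gl x" "T = gl x" by blast
    then show "(y \<in> Up) = (T \<subseteq> Up)" using gl_sub[of x] UpLo by blast
  qed
  also have "\<dots> = size (filter_mset (\<lambda>x. gl x \<subseteq> Up) M)" by (rule filter_image_size)
  also have "filter_mset (\<lambda>x. gl x \<subseteq> Up) M = filter_mset (\<lambda>x. x \<in> sigma1) M"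
    apply (rule filter_mset_cong0)
    subgoal for x using gl_sub[of x] gl_ne[of x] UpLo by blast
    done
  also have "size \<dots> = 1" using M unfolding orcx_node_def by simp
  finally have f: "size (filter_mset (\<lambda>y. y \<in> Up) C') = 1" .
  have mem: "\<And>x. x \<in># M \<Longrightarrow> \<exists>y\<in>#C'. y \<in> gl x"
  proof -
    fix x assume "x \<in># M"
    then have "gl x \<in># image_mset gl M" by simp
    then show "\<exists>y\<in>#C'. y \<in> gl x" using rel_mset_memR[OF C'] by blast
  qed
  have "LB \<in># C' \<or> Lb \<in># C' \<or> ((LP \<in># C' \<or> Lp \<in># C') \<and> (LQ \<in># C' \<or> Lq \<in># C'))"
    using M unfolding node_shapes
  proof (elim insertE emptyE)
    assume "M = sh1 n" then show ?thesis using mem[of BX] by (auto simp: sh1_def)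
  next
    assume "M = sh2 n" then show ?thesis using mem[of sx] by (auto simp: sh2_def)
  next
    assume "M = sh3 n" then show ?thesis using mem[of BR] mem[of sc] by (auto simp: sh3_def)
  next
    assume "M = sh4 n" then show ?thesis using mem[of BC] mem[of sr] by (auto simp: sh4_def)
  next
    assume "M = sh5 n" then show ?thesis using mem[of sr] mem[of sc] by (auto simp: sh5_def)
  qed
  then show ?thesis unfolding goodR_def using sz sub f by auto
qed


fun pick :: "'a list \<Rightarrow> 'a set \<Rightarrow> 'a" where
  "pick [] S = undefined"
| "pick (x # xs) S = (if x \<in> S then x else pick xs S)"

lemma pick_in: "S \<noteq> {} \<Longrightarrow> S \<subseteq> set xs \<Longrightarrow> pick xs S \<in> S"
  by (induct xs) auto

definition "l1 = [LA, LP, LQ, LB, La, Lp, Lq, Lb]"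
definition "l2 = [La, Lp, Lq, Lb, LA, LP, LQ, LB]"
definition "l3 = [LA, La, LP, Lp, LQ, Lq, LB, Lb]"
definition "l4 = [LA, La, LQ, Lq, LP, Lp, LB, Lb]"

lemma set_l: "set l1 = Lab8" "set l2 = Lab8" "set l3 = Lab8" "set l4 = Lab8"
  unfolding l1_def l2_def l3_def l4_def Lab8_def by auto

lemma Lab8_in: "x \<in> Lab8 \<longleftrightarrow> x = LA \<or> x = LB \<or> x = LP \<or> x = LQ \<or> x = La \<or> x = Lb \<or> x = Lp \<or> x = Lq"
  unfolding Lab8_def by simp

lemma Up_in: "x \<in> Up \<longleftrightarrow> x = LA \<or> x = LB \<or> x = LP \<or> x = LQ"
  unfolding Up_def by simp

lemma Lo_in: "x \<in> Lo \<longleftrightarrow> x = La \<or> x = Lb \<or> x = Lp \<or> x = Lq"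
  unfolding Lo_def by simp

lemma p1: "S \<subseteq> Lab8 \<Longrightarrow> S \<noteq> {} \<Longrightarrow> pick l1 S \<in> Up \<longleftrightarrow> S \<inter> Up \<noteq> {}"
  unfolding l1_def by (auto simp: Up_in Lab8_in)

lemma p2: "S \<subseteq> Lab8 \<Longrightarrow> S \<noteq> {} \<Longrightarrow> pick l2 S \<in> Up \<longleftrightarrow> S \<inter> Lo = {}"
  unfolding l2_def by (auto simp: Up_in Lab8_in Lo_in)

lemma p3: "pick l3 S = LB \<or> pick l3 S = Lb \<or> pick l3 S = LQ \<or> pick l3 S = Lq \<Longrightarrow> LA \<notin> S \<and> La \<notin> S \<and> LP \<notin> S \<and> Lp \<notin> S"
  unfolding l3_def by (simp split: if_splits)

lemma p3b: "pick l3 S = LB \<or> pick l3 S = Lb \<Longrightarrow> LQ \<notin> S \<and> Lq \<notin> S"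
  unfolding l3_def by (simp split: if_splits)

lemma p4: "pick l4 S = LB \<or> pick l4 S = Lb \<or> pick l4 S = LP \<or> pick l4 S = Lp \<Longrightarrow> LA \<notin> S \<and> La \<notin> S \<and> LQ \<notin> S \<and> Lq \<notin> S"
  unfolding l4_def by (simp split: if_splits)

lemma p4b: "pick l4 S = LB \<or> pick l4 S = Lb \<Longrightarrow> LP \<notin> S \<and> Lp \<notin> S"
  unfolding l4_def by (simp split: if_splits)

lemma Lab8_UpLo: "Lab8 = Up \<union> Lo" unfolding Lab8_def Up_def Lo_def by auto

lemma filter_none: "(\<forall>x\<in>#M. \<not> P x) \<Longrightarrow> filter_mset P M = {#}"
  by (induct M) auto

lemma img_mem: "x \<in># image_mset f D \<Longrightarrow> \<exists>S\<in>#D. f S = x" by auto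

lemma sub_cases: "U \<subseteq> A \<Longrightarrow> U \<subseteq> B \<Longrightarrow> (\<And>t. t \<in> A \<Longrightarrow> t \<in> B \<Longrightarrow> t \<in> C) \<Longrightarrow> U \<subseteq> C"
  by blast
lemma s1: "U \<subseteq> Up \<Longrightarrow> U \<subseteq> {LB, Lb} \<Longrightarrow> U \<subseteq> {LB}" by (erule (1) sub_cases, simp only: Up_def Lo_def insert_iff empty_iff simp_thms, elim disjE, simp_all)
lemma s2: "S \<subseteq> Lo \<Longrightarrow> S \<subseteq> {LB, Lb} \<Longrightarrow> S \<subseteq> {Lb}" by (erule (1) sub_cases, simp only: Up_def Lo_def insert_iff empty_iff simp_thms, elim disjE, simp_all)
lemma s3: "U \<subseteq> Up \<Longrightarrow> U \<subseteq> {LQ, Lq, LB, Lb} \<Longrightarrow> U \<subseteq> {LQ, LB}" by (erule (1) sub_cases, simp only: Up_def Lo_def insert_iff empty_iff simp_thms, elim disjE, simp_all)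
lemma s4: "U \<subseteq> {LQ, LB} \<Longrightarrow> U \<subseteq> {LP, Lp, LB, Lb} \<Longrightarrow> U \<subseteq> {LB, Lb}" by (erule (1) sub_cases, simp only: Up_def Lo_def insert_iff empty_iff simp_thms, elim disjE, simp_all)
lemma s5: "S \<subseteq> Lo \<Longrightarrow> S \<subseteq> {LP, Lp, LB, Lb} \<Longrightarrow> S \<subseteq> {Lp, Lb}" by (erule (1) sub_cases, simp only: Up_def Lo_def insert_iff empty_iff simp_thms, elim disjE, simp_all)
lemma s6: "S \<subseteq> Lo \<Longrightarrow> S \<subseteq> {LQ, Lq, LB, Lb} \<Longrightarrow> S \<subseteq> {Lq, Lb}" by (erule (1) sub_cases, simp only: Up_def Lo_def insert_iff empty_iff simp_thms, elim disjE, simp_all)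
lemma s7: "U \<subseteq> Up \<Longrightarrow> U \<subseteq> {LP, Lp, LB, Lb} \<Longrightarrow> U \<subseteq> {LP, LB}" by (erule (1) sub_cases, simp only: Up_def Lo_def insert_iff empty_iff simp_thms, elim disjE, simp_all)
lemma s8: "S \<subseteq> {Lq, Lb} \<Longrightarrow> S \<subseteq> {Lp, Lb} \<Longrightarrow> S \<subseteq> {LB, Lb}" by (erule (1) sub_cases, simp only: Up_def Lo_def insert_iff empty_iff simp_thms, elim disjE, simp_all)

lemma cand_dom2:
  assumes sz: "size D = Suc (Suc (Suc n))" and ne: "\<forall>S\<in>#D. S \<noteq> {} \<and> S \<subseteq> Lab8"
    and good: "\<And>l. set l = Lab8 \<Longrightarrow> goodR (Suc (Suc (Suc n))) (image_mset (pick l) D)"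
  shows "\<exists>M\<in>orcx_node (Suc (Suc (Suc n))). dominated D (image_mset gl M)"
proof -
  have "size (filter_mset (\<lambda>y. y \<in> Up) (image_mset (pick l1) D)) = 1"
    using good[OF set_l(1)] unfolding goodR_def by blast
  then have "size (filter_mset (\<lambda>S. pick l1 S \<in> Up) D) = 1" by (simp only: filter_image_size)
  moreover have "filter_mset (\<lambda>S. pick l1 S \<in> Up) D = filter_mset (\<lambda>S. S \<inter> Up \<noteq> {}) D"
    by (rule filter_mset_cong0) (use ne p1 in blast)
  ultimately have "size (filter_mset (\<lambda>S. S \<inter> Up \<noteq> {}) D) = 1" by simp
  then obtain U D0 where D: "D = add_mset U D0" "U \<inter> Up \<noteq> {}" "\<forall>S\<in>#D0. \<not> S \<inter> Up \<noteq> {}"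
    using filter1[of "\<lambda>S. S \<inter> Up \<noteq> {}" D] by blast
  have Une: "U \<noteq> {}" "U \<subseteq> Lab8" using ne D(1) by auto
  have D0ne: "\<forall>S\<in>#D0. S \<noteq> {} \<and> S \<subseteq> Lo"
  proof
    fix S assume S: "S \<in># D0"
    then have "S \<noteq> {}" "S \<subseteq> Lab8" "S \<inter> Up = {}" using ne D by auto
    then show "S \<noteq> {} \<and> S \<subseteq> Lo" unfolding Lab8_UpLo by blast
  qed
  have "size (filter_mset (\<lambda>y. y \<in> Up) (image_mset (pick l2) D)) = 1"
    using good[OF set_l(2)] unfolding goodR_def by blast
  then have "size (filter_mset (\<lambda>S. pick l2 S \<in> Up) D) = 1" by (simp only: filter_image_size)
  moreover have "filter_mset (\<lambda>S. pick l2 S \<in> Up) D = filter_mset (\<lambda>S. S \<inter> Lo = {}) D"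
    by (rule filter_mset_cong0) (use ne p2 in blast)
  ultimately have f2: "size (filter_mset (\<lambda>S. S \<inter> Lo = {}) D) = 1" by simp
  have fD0: "filter_mset (\<lambda>S. S \<inter> Lo = {}) D0 = {#}"
    by (rule filter_none) (use D0ne in blast)
  have "U \<inter> Lo = {}"
  proof (rule ccontr)
    assume "U \<inter> Lo \<noteq> {}"
    then have "filter_mset (\<lambda>S. S \<inter> Lo = {}) D = filter_mset (\<lambda>S. S \<inter> Lo = {}) D0"
      unfolding D(1) by simp
    then have "size (filter_mset (\<lambda>S. S \<inter> Lo = {}) D) = 0" by (simp only: fD0 size_empty)
    then show False using f2 by simp
  qed
  then have Uup: "U \<subseteq> Up" using Une unfolding Lab8_UpLo by blast
  have szD0: "size D0 = Suc (Suc n)" using sz D(1) by simp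
  have rest: "\<And>D1. (\<forall>S\<in>#D1. S \<subseteq> Lo) \<Longrightarrow> rel_mset (\<subseteq>) D1 (replicate_mset (size D1) Lo)"
    by (rule rel_mset_repl) blast
  show ?thesis
  proof (cases "\<exists>S\<in>#D. S \<subseteq> {LB, Lb}")
    case True
    then obtain S where S: "S \<in># D" "S \<subseteq> {LB, Lb}" by blast
    then have "S = U \<or> S \<in># D0" using D(1) by auto
    then show ?thesis
    proof
      assume "S = U"
      then have "U \<subseteq> {LB, Lb}" using S(2) by simp
      then have U1: "U \<subseteq> {LB}" by (rule s1[OF Uup])
      have "rel_mset (\<subseteq>) D0 (replicate_mset (size D0) Lo)" using rest D0ne by blast
      then have "dominated D (image_mset gl (sh1 n))"
        unfolding dominated_def D(1) sh1_def using U1 szD0 by (auto simp: image_repl intro!: rel_mset_Plus)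
      then show ?thesis unfolding node_shapes by blast
    next
      assume S0: "S \<in># D0"
      then have "S \<subseteq> Lo" using D0ne by blast
      then have S1: "S \<subseteq> {Lb}" using S(2) by (rule s2)
      obtain D1 where D1: "D0 = add_mset S D1" using S0 by (metis multi_member_split)
      have "rel_mset (\<subseteq>) D1 (replicate_mset (size D1) Lo)" using rest D0ne D1 by auto
      moreover have "size D1 = Suc n" using szD0 D1 by simp
      ultimately have "dominated D (image_mset gl (sh2 n))"
        unfolding dominated_def D(1) D1 sh2_def using Uup S1 by (auto simp: image_repl intro!: rel_mset_Plus)
      then show ?thesis unfolding node_shapes by blast
    qed
  next
    case nB: False
    have g3: "goodR (Suc (Suc (Suc n))) (image_mset (pick l3) D)" using good[OF set_l(3)] .
    have g4: "goodR (Suc (Suc (Suc n))) (image_mset (pick l4) D)" using good[OF set_l(4)] .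
    have subB: "\<And>S. S \<subseteq> Lab8 \<Longrightarrow> LA \<notin> S \<Longrightarrow> La \<notin> S \<Longrightarrow> LP \<notin> S \<Longrightarrow> Lp \<notin> S
       \<Longrightarrow> LQ \<notin> S \<Longrightarrow> Lq \<notin> S \<Longrightarrow> S \<subseteq> {LB, Lb}"
      by (auto simp: Lab8_in)
    have n3: "\<not> (LB \<in># image_mset (pick l3) D \<or> Lb \<in># image_mset (pick l3) D)"
    proof
      assume "LB \<in># image_mset (pick l3) D \<or> Lb \<in># image_mset (pick l3) D"
      then obtain S where S: "S \<in># D" "pick l3 S = LB \<or> pick l3 S = Lb" by auto
      then have "S \<subseteq> {LB, Lb}" using p3[of S] p3b[of S] subB[of S] ne by blast
      then show False using nB S by blast
    qed
    have n4: "\<not> (LB \<in># image_mset (pick l4) D \<or> Lb \<in># image_mset (pick l4) D)"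
    proof
      assume "LB \<in># image_mset (pick l4) D \<or> Lb \<in># image_mset (pick l4) D"
      then obtain S where S: "S \<in># D" "pick l4 S = LB \<or> pick l4 S = Lb" by auto
      then have "S \<subseteq> {LB, Lb}" using p4[of S] p4b[of S] subB[of S] ne by blast
      then show False using nB S by blast
    qed
    have "LQ \<in># image_mset (pick l3) D \<or> Lq \<in># image_mset (pick l3) D" using g3 n3 unfolding goodR_def by blast
    then obtain S where S: "S \<in># D" "pick l3 S = LQ \<or> pick l3 S = Lq" by auto
    moreover have subQ: "\<And>S. S \<subseteq> Lab8 \<Longrightarrow> LA \<notin> S \<Longrightarrow> La \<notin> S \<Longrightarrow> LP \<notin> S \<Longrightarrow> Lp \<notin> S
       \<Longrightarrow> S \<subseteq> {LQ, Lq, LB, Lb}"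
      by (auto simp: Lab8_in)
    ultimately have SQ: "S \<subseteq> {LQ, Lq, LB, Lb}" using p3[of S] ne by blast
    have "LP \<in># image_mset (pick l4) D \<or> Lp \<in># image_mset (pick l4) D" using g4 n4 unfolding goodR_def by blast
    then obtain S' where S': "S' \<in># D" "pick l4 S' = LP \<or> pick l4 S' = Lp" by auto
    moreover have subP: "\<And>S. S \<subseteq> Lab8 \<Longrightarrow> LA \<notin> S \<Longrightarrow> La \<notin> S \<Longrightarrow> LQ \<notin> S \<Longrightarrow> Lq \<notin> S
       \<Longrightarrow> S \<subseteq> {LP, Lp, LB, Lb}"
      by (auto simp: Lab8_in)
    ultimately have SP: "S' \<subseteq> {LP, Lp, LB, Lb}" using p4[of S'] ne by blast
    have "S = U \<or> S \<in># D0" using S D(1) by auto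
    then show ?thesis
    proof
      assume SU: "S = U"
      then have "U \<subseteq> {LQ, Lq, LB, Lb}" using SQ by simp
      then have U1: "U \<subseteq> {LQ, LB}" by (rule s3[OF Uup])
      have "S' \<noteq> U"
      proof
        assume "S' = U"
        then have "U \<subseteq> {LP, Lp, LB, Lb}" using SP by simp
        then have "U \<subseteq> {LB, Lb}" by (rule s4[OF U1])
        then show False using nB D(1) by auto
      qed
      then have S'0: "S' \<in># D0" using S' D(1) by auto
      then have "S' \<subseteq> Lo" using D0ne by blast
      then have S'1: "S' \<subseteq> {Lp, Lb}" using SP by (rule s5)
      obtain D1 where D1: "D0 = add_mset S' D1" using S'0 by (metis multi_member_split)
      have "rel_mset (\<subseteq>) D1 (replicate_mset (size D1) Lo)" using rest D0ne D1 by auto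
      moreover have "size D1 = Suc n" using szD0 D1 by simp
      ultimately have "dominated D (image_mset gl (sh4 n))"
        unfolding dominated_def D(1) D1 sh4_def using U1 S'1 by (auto simp: image_repl intro!: rel_mset_Plus)
      then show ?thesis unfolding node_shapes by blast
    next
      assume S0: "S \<in># D0"
      then have "S \<subseteq> Lo" using D0ne by blast
      then have S1: "S \<subseteq> {Lq, Lb}" using SQ by (rule s6)
      obtain D1 where D1: "D0 = add_mset S D1" using S0 by (metis multi_member_split)
      have "S' = U \<or> S' \<in># D0" using S' D(1) by auto
      then show ?thesis
      proof
        assume "S' = U"
        then have "U \<subseteq> {LP, Lp, LB, Lb}" using SP by simp
        then have U1: "U \<subseteq> {LP, LB}" by (rule s7[OF Uup])
        have "rel_mset (\<subseteq>) D1 (replicate_mset (size D1) Lo)" using rest D0ne D1 by auto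
        moreover have "size D1 = Suc n" using szD0 D1 by simp
        ultimately have "dominated D (image_mset gl (sh3 n))"
          unfolding dominated_def D(1) D1 sh3_def using U1 S1 by (auto simp: image_repl intro!: rel_mset_Plus)
        then show ?thesis unfolding node_shapes by blast
      next
        assume S'0: "S' \<in># D0"
        then have "S' \<subseteq> Lo" using D0ne by blast
      then have S'1: "S' \<subseteq> {Lp, Lb}" using SP by (rule s5)
        have "S' \<noteq> S"
        proof
          assume "S' = S"
          then have "S \<subseteq> {Lp, Lb}" using S'1 by simp
          then have "S \<subseteq> {LB, Lb}" by (rule s8[OF S1])
          then show False using nB S by blast
        qed
        then have "S' \<in># D1" using S'0 D1 by auto
        then obtain D2 where D2: "D1 = add_mset S' D2" by (metis multi_member_split)
        have "rel_mset (\<subseteq>) D2 (replicate_mset (size D2) Lo)" using rest D0ne D1 D2 by auto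
        moreover have "size D2 = n" using szD0 D1 D2 by simp
        moreover have "D = add_mset U (add_mset S' (add_mset S D2))"
          unfolding D(1) D1 D2 by (simp add: add_mset_commute)
        ultimately have "dominated D (image_mset gl (sh5 n))"
          unfolding dominated_def sh5_def using Uup S1 S'1 by (auto simp: image_repl intro!: rel_mset_Plus)
        then show ?thesis unfolding node_shapes by blast
      qed
    qed
  qed
qed


definition cT :: "orcx set set multiset \<Rightarrow> nat" where
  "cT C = size (filter_mset (\<lambda>T. T \<subseteq> {LB, Lb}) C)"

lemma card_Up: "card Up = 4" unfolding Up_def by simp
lemma card_Lo: "card Lo = 4" unfolding Lo_def by simp
lemma Lo_nsub: "\<not> Lo \<subseteq> {LB, Lb}" unfolding Lo_def by simp
lemma Up_nsub: "\<not> Up \<subseteq> {LB, Lb}" unfolding Up_def by simp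

lemma sig_gl:
  assumes "M \<in> orcx_node (Suc (Suc (Suc n)))"
  shows "(sig (image_mset gl M) = 4 * n + 9 \<and> cT (image_mset gl M) = 1) \<or>
         (sig (image_mset gl M) = 4 * n + 8 \<and> cT (image_mset gl M) = 0)"
  using assms unfolding node_shapes
  apply (elim insertE emptyE)
  apply (simp_all add: sig_def cT_def shdefs image_repl filter_repl card_Up card_Lo Lo_nsub Up_nsub)
  done

lemma dom_cT: "dominated A B \<Longrightarrow> cT B \<le> cT A"
  unfolding dominated_def cT_def
  by (rule rel_mset_filter_le[where R="(\<subseteq>)" and P="\<lambda>T. T \<subseteq> {LB, Lb}" and Q="\<lambda>T. T \<subseteq> {LB, Lb}"]) auto

lemma fin_gl: "\<forall>S\<in>#image_mset gl M. finite S"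
proof
  fix S assume "S \<in># image_mset gl M"
  then obtain x where "S = gl x" by auto
  then show "finite S" using gl_Lab8[of x] Lab8_fin finite_subset by blast
qed

lemma anti_gl:
  assumes "M \<in> orcx_node (Suc (Suc (Suc n)))" "M' \<in> orcx_node (Suc (Suc (Suc n)))"
    "dominated (image_mset gl M) (image_mset gl M')"
  shows "sig (image_mset gl M) = sig (image_mset gl M')"
proof -
  have "cT (image_mset gl M') \<le> cT (image_mset gl M)" using dom_cT[OF assms(3)] .
  moreover have "sig (image_mset gl M) \<le> sig (image_mset gl M')"
    using rel_mset_sigma[OF assms(3)[unfolded dominated_def] fin_gl] unfolding sig_def by blast
  ultimately show ?thesis using sig_gl[OF assms(1)] sig_gl[OF assms(2)] by auto
qed

lemma cand_set:
  "REbar_node_cand \<Delta> (RE \<Delta> (Pi_orcx \<Delta>)) =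
    {C. size C = \<Delta> \<and> (\<forall>S\<in>#C. S \<noteq> {} \<and> S \<subseteq> Lab8) \<and> (\<forall>C'. is_choice C' C \<longrightarrow> C' \<in> NR \<Delta>)}"
  unfolding REbar_node_cand_def RE_Pi labels_def nodeC_def by simp

lemma nodes_R:
  "{C. maximal_in (REbar_node_cand (Suc (Suc (Suc n))) (RE (Suc (Suc (Suc n))) (Pi_orcx (Suc (Suc (Suc n)))))) C}
   = image_mset gl ` orcx_node (Suc (Suc (Suc n)))"
proof (rule max_char)
  show "image_mset gl ` orcx_node (Suc (Suc (Suc n)))
      \<subseteq> REbar_node_cand (Suc (Suc (Suc n))) (RE (Suc (Suc (Suc n))) (Pi_orcx (Suc (Suc (Suc n)))))"
  proof
    fix E assume "E \<in> image_mset gl ` orcx_node (Suc (Suc (Suc n)))"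
    then obtain M where M: "M \<in> orcx_node (Suc (Suc (Suc n)))" "E = image_mset gl M" by auto
    have "size E = Suc (Suc (Suc n))" using M unfolding orcx_node_def by simp
    moreover have "\<forall>S\<in>#E. S \<noteq> {} \<and> S \<subseteq> Lab8" using M(2) gl_ne gl_Lab8 by auto
    moreover have "\<forall>C'. is_choice C' E \<longrightarrow> C' \<in> NR (Suc (Suc (Suc n)))"
      using img_cand[OF M(1)] NR_iff M(2) unfolding is_choice_def by blast
    ultimately show "E \<in> REbar_node_cand (Suc (Suc (Suc n))) (RE (Suc (Suc (Suc n))) (Pi_orcx (Suc (Suc (Suc n)))))"
      unfolding cand_set by blast
  qed
next
  show "\<forall>C\<in>REbar_node_cand (Suc (Suc (Suc n))) (RE (Suc (Suc (Suc n))) (Pi_orcx (Suc (Suc (Suc n))))).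
     \<exists>E\<in>image_mset gl ` orcx_node (Suc (Suc (Suc n))). dominated C E"
  proof
    fix C assume "C \<in> REbar_node_cand (Suc (Suc (Suc n))) (RE (Suc (Suc (Suc n))) (Pi_orcx (Suc (Suc (Suc n)))))"
    then have C: "size C = Suc (Suc (Suc n))" "\<forall>S\<in>#C. S \<noteq> {} \<and> S \<subseteq> Lab8"
      "\<forall>C'. is_choice C' C \<longrightarrow> C' \<in> NR (Suc (Suc (Suc n)))" unfolding cand_set by auto
    have "\<And>l. set l = Lab8 \<Longrightarrow> goodR (Suc (Suc (Suc n))) (image_mset (pick l) C)"
    proof -
      fix l :: "orcx set list" assume l: "set l = Lab8"
      have "rel_mset (\<in>) (image_mset (pick l) C) C"
      proof (rule rel_mset_image, rule ballI)
        fix S assume "S \<in># C"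
        then have "S \<noteq> {}" "S \<subseteq> set l" using C(2) l by auto
        then show "pick l S \<in> S" by (rule pick_in)
      qed
      then show "goodR (Suc (Suc (Suc n))) (image_mset (pick l) C)"
        using C(3) NR_iff unfolding is_choice_def by blast
    qed
    from cand_dom2[OF C(1,2) this]
    show "\<exists>E\<in>image_mset gl ` orcx_node (Suc (Suc (Suc n))). dominated C E" by blast
  qed
next
  show "\<forall>E\<in>image_mset gl ` orcx_node (Suc (Suc (Suc n))). \<forall>E'\<in>image_mset gl ` orcx_node (Suc (Suc (Suc n))).
     dominated E E' \<longrightarrow> sig E = sig E'"
    using anti_gl by blast
next
  show "\<forall>C\<in>REbar_node_cand (Suc (Suc (Suc n))) (RE (Suc (Suc (Suc n))) (Pi_orcx (Suc (Suc (Suc n))))).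
     \<forall>S\<in>#C. finite S"
    unfolding cand_set using Lab8_fin finite_subset by blast
qed


lemma labels_R: "(\<Union>C\<in>image_mset gl ` orcx_node (Suc (Suc (Suc n))). set_mset C) = range gl"
proof
  show "(\<Union>C\<in>image_mset gl ` orcx_node (Suc (Suc (Suc n))). set_mset C) \<subseteq> range gl" by auto
next
  show "range gl \<subseteq> (\<Union>C\<in>image_mset gl ` orcx_node (Suc (Suc (Suc n))). set_mset C)"
  proof
    fix T assume "T \<in> range gl"
    then obtain x where x: "T = gl x" by auto
    have "\<exists>M\<in>orcx_node (Suc (Suc (Suc n))). x \<in># M"
      unfolding node_shapes by (cases x) (auto simp: shdefs)
    then show "T \<in> (\<Union>C\<in>image_mset gl ` orcx_node (Suc (Suc (Suc n))). set_mset C)" using x by auto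
  qed
qed

lemma E5_choice: "(\<exists>C'\<in>E5. is_choice C' {#gl u, gl v#}) \<longleftrightarrow> compat u v"
  unfolding E5_def is_choice_def
  by (cases u; cases v) (simp_all add: rel_mset_two Up_def Lo_def)

lemma edge_two: "C \<in> orcx_edge \<Longrightarrow> \<exists>u v. C = {#u, v#}"
  unfolding orcx_edge_def pairs_def by auto

lemma edges_R:
  "{C. size C = 2 \<and> set_mset C \<subseteq> range gl \<and> (\<exists>C'\<in>E5. is_choice C' C)} = image_mset gl ` orcx_edge"
proof
  show "{C. size C = 2 \<and> set_mset C \<subseteq> range gl \<and> (\<exists>C'\<in>E5. is_choice C' C)} \<subseteq> image_mset gl ` orcx_edge"
  proof
    fix C assume "C \<in> {C. size C = 2 \<and> set_mset C \<subseteq> range gl \<and> (\<exists>C'\<in>E5. is_choice C' C)}"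
    then have C: "size C = 2" "set_mset C \<subseteq> range gl" "\<exists>C'\<in>E5. is_choice C' C" by auto
    obtain S T where ST: "C = {#S, T#}" using size_two[OF C(1)] by blast
    obtain u v where uv: "S = gl u" "T = gl v" using C(2) ST by auto
    have "compat u v" using C(3) E5_choice ST uv by simp
    then have "{#u, v#} \<in> orcx_edge" using edge_compat by simp
    moreover have "C = image_mset gl {#u, v#}" using ST uv by simp
    ultimately show "C \<in> image_mset gl ` orcx_edge" by blast
  qed
next
  show "image_mset gl ` orcx_edge \<subseteq> {C. size C = 2 \<and> set_mset C \<subseteq> range gl \<and> (\<exists>C'\<in>E5. is_choice C' C)}"
  proof
    fix C assume "C \<in> image_mset gl ` orcx_edge"
    then obtain M where M: "M \<in> orcx_edge" "C = image_mset gl M" by auto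
    obtain u v where uv: "M = {#u, v#}" using edge_two[OF M(1)] by blast
    have "compat u v" using M(1) uv edge_compat by simp
    then have "\<exists>C'\<in>E5. is_choice C' {#gl u, gl v#}" using E5_choice by simp
    then show "C \<in> {C. size C = 2 \<and> set_mset C \<subseteq> range gl \<and> (\<exists>C'\<in>E5. is_choice C' C)}"
      using M(2) uv by auto
  qed
qed

definition hinv :: "orcx set set \<Rightarrow> orcx" where
  "hinv T = (if LA \<in> T then BO else if LP \<in> T then BR else if LQ \<in> T then BC else if LB \<in> T then BX
     else if La \<in> T then so else if Lp \<in> T then sr else if Lq \<in> T then sc else sx)"

lemma hinv_gl[simp]: "hinv (gl x) = x"
  unfolding hinv_def by (cases x) (simp_all add: Up_def Lo_def)

lemma img_hinv: "image_mset hinv (image_mset gl M) = M"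
  by (simp add: multiset.map_comp comp_def)

theorem main_n:
  "iso_problem (REbar (Suc (Suc (Suc n))) (RE (Suc (Suc (Suc n))) (Pi_orcx (Suc (Suc (Suc n))))))
      (Pi_orcx (Suc (Suc (Suc n))))"
proof -
  have eq: "REbar (Suc (Suc (Suc n))) (RE (Suc (Suc (Suc n))) (Pi_orcx (Suc (Suc (Suc n))))) =
     (range gl, image_mset gl ` orcx_node (Suc (Suc (Suc n))), image_mset gl ` orcx_edge)"
    unfolding REbar_def Let_def nodes_R labels_R
    by (simp add: RE_Pi edgeC_def edges_R)
  have bij: "bij_betw hinv (range gl) UNIV"
    by (rule bij_betw_byWitness[where f'=gl]) auto
  show ?thesis
    unfolding iso_problem_def eq
    apply (rule exI[of _ hinv])
    apply (simp only: Pi_simps)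
    apply (simp add: labels_def nodeC_def edgeC_def bij image_image img_hinv)
    done
qed


theorem mainTheorem18:
  fixes \<Delta> :: nat
  assumes "\<Delta> \<ge> 3"
  shows "iso_problem (REbar \<Delta> (RE \<Delta> (Pi_orcx \<Delta>))) (Pi_orcx \<Delta>)"
proof -
  define n where "n = \<Delta> - 3"
  have "\<Delta> = Suc (Suc (Suc n))" using assms unfolding n_def by arith
  then show ?thesis using main_n by simp
qed

end
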